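(* Let $(X,\wedge,\vee,\bot,\top)$ be a bounded distributive lattice, let $n\ge 1$, and let $x=(x_1,\ldots,x_n)$ be a sequence of elements of $X$. For $0\le m\le n$ and $0\le k\le m+1$ define $$P_m(k)=\begin{cases}\bot & k=0,\\ \bigwedge_{I\subseteq\{1,\ldots,m\},\ |I|=k}\ \bigvee_{i\in I} x_i & 1\le k\le m,\\ \top & k=m+1.\end{cases}$$ Then for every $k$ with $1\le k\le n$, $$P_n(k)=P_{n-1}(k)\wedge\bigl(P_{n-1}(k-1)\vee x_n\bigr).$$
   Context: For $1\le k\le m$, $P_m(k)$ is the $k$-th element of the sequence $(x_1,\ldots,x_m)$ "sorted with respect to the lattice", i.e. the meet, over all $k$-element subsets $I$ of $\{1,\ldots,m\}$, of the join of the $x_i$ with $i\in I$. Here $\bot$ is the least and $\top$ the greatest element of $X$. *)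

theory Defs
  imports Main
begin

text \<open>P x m k: the k-th element of (x_1,...,x_m) sorted w.r.t. the lattice.\<close>
definition P :: "(nat \<Rightarrow> 'a::{bounded_lattice, distrib_lattice}) \<Rightarrow> nat \<Rightarrow> nat \<Rightarrow> 'a" where
  "P x m k = (if k = 0 then bot
              else if k \<le> m then
                Inf_fin ((\<lambda>I. Sup_fin (x ` I)) ` {I. I \<subseteq> {1..m} \<and> card I = k})
              else top)"

end

theory Submission
  imports Defs
begin

lemma inf_fin_sup_const:
  fixes f :: "'b \<Rightarrow> 'a::distrib_lattice"
  assumes "finite B" "B \<noteq> {}"
  shows "Inf_fin ((\<lambda>J. sup c (f J)) ` B) = sup c (Inf_fin (f ` B))"
proof -
  have "sup c (Inf_fin (f ` B)) = Inf_fin (sup c ` (f ` B))"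
    using assms by (intro Inf_fin.hom_commute[where h="sup c"]) (auto simp: sup_inf_distrib1)
  thus ?thesis by (simp add: image_image)
qed

lemma card_sub_exists:
  assumes "k \<le> m" shows "{1..k} \<in> {I. I \<subseteq> {1..m} \<and> card I = (k::nat)}"
  using assms by auto

theorem proposition3p1:
  fixes x :: "nat \<Rightarrow> 'a::{bounded_lattice, distrib_lattice}"
    and n k :: nat
  assumes "1 \<le> n" and "1 \<le> k" and "k \<le> n"
  shows "P x n k = inf (P x (n - 1) k) (sup (P x (n - 1) (k - 1)) (x n))"
proof -
  define m where "m = n - 1"
  have n: "n = Suc m" using assms m_def by simp
  define S where "S = (\<lambda>I. Sup_fin (x ` I))"
  define A where "A = (\<lambda>j. {I. I \<subseteq> {1..m} \<and> card I = j})"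
  have finA: "finite (A j)" for j unfolding A_def
    by (rule finite_subset[of _ "Pow {1..m}"]) auto
  have neA: "j \<le> m \<Longrightarrow> A j \<noteq> {}" for j unfolding A_def using card_sub_exists by blast
  have Pm: "P x m j = Inf_fin (S ` A j)" if "1 \<le> j" "j \<le> m" for j
    using that by (simp add: P_def S_def A_def)
  have Pn: "P x n k = Inf_fin (S ` {I. I \<subseteq> {1..n} \<and> card I = k})"
    using assms by (simp add: P_def S_def)
  have split: "{I. I \<subseteq> {1..n} \<and> card I = k} = A k \<union> insert n ` A (k - 1)"
  proof (intro set_eqI iffI)
    fix I assume I: "I \<in> {I. I \<subseteq> {1..n} \<and> card I = k}"
    show "I \<in> A k \<union> insert n ` A (k - 1)"
    proof (cases "n \<in> I")
      case True
      have fI: "finite I" using I finite_subset by blast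
      have "I - {n} \<in> A (k - 1)" using I True fI unfolding A_def n by auto
      moreover have "I = insert n (I - {n})" using True by auto
      ultimately show ?thesis by blast
    next
      case False
      then have "I \<in> A k" using I unfolding A_def n by (auto simp: subset_iff) (metis atLeastAtMost_iff le_Suc_eq)
      thus ?thesis by blast
    qed
  next
    fix I assume "I \<in> A k \<union> insert n ` A (k - 1)"
    then show "I \<in> {I. I \<subseteq> {1..n} \<and> card I = k}"
    proof
      assume "I \<in> A k" thus ?thesis unfolding A_def n by auto
    next
      assume "I \<in> insert n ` A (k - 1)"
      then obtain J where J: "J \<in> A (k - 1)" "I = insert n J" by blast
      have "finite J" "n \<notin> J" using J unfolding A_def n by (auto intro: finite_subset)
      thus ?thesis using J assms unfolding A_def n by auto
    qed
  qed
  have Sins: "S (insert n J) = (if J = {} then x n else sup (x n) (S J))" if "finite J" for J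
    using that by (simp add: S_def)
  show ?thesis
  proof (cases "k = n")
    case True
    have Ak: "{I. I \<subseteq> {1..n} \<and> card I = k} = {{1..n}}"
      using True
    proof (intro set_eqI iffI)
      fix I assume "I \<in> {I. I \<subseteq> {1..n} \<and> card I = k}"
      then have "I \<subseteq> {1..n}" "card I = card {1..n}" using True by auto
      then show "I \<in> {{1..n}}" using card_subset_eq[of "{1..n}" I] by simp
    qed auto
    have Pmk: "P x m k = top" using True n by (simp add: P_def)
    show ?thesis
    proof (cases "m = 0")
      case True
      thus ?thesis using n Pn Ak Pmk \<open>k = n\<close> by (simp add: S_def P_def)
    next
      case False
      have "P x m (k - 1) = Inf_fin (S ` A m)" using Pm[of "k-1"] False True n by simp
      moreover have "A m = {{1..m}}" unfolding A_def
      proof (intro set_eqI iffI)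
        fix I assume "I \<in> {I. I \<subseteq> {1..m} \<and> card I = m}"
        then have "I \<subseteq> {1..m}" "card I = card {1..m}" by auto
        then show "I \<in> {{1..m}}" using card_subset_eq[of "{1..m}" I] by simp
      qed auto
      moreover have "{1..n} = insert n {1..m}" using n by auto
      ultimately show ?thesis using Pn Ak Pmk False m_def
        by (simp add: S_def sup_commute)
    qed
  next
    case False
    hence km: "k \<le> m" using assms n by simp
    have finJ: "J \<in> A j \<Longrightarrow> finite J" for J j unfolding A_def by (auto intro: finite_subset)
    have "P x n k = inf (Inf_fin (S ` A k)) (Inf_fin (S ` insert n ` A (k - 1)))"
      using Pn split finA neA[OF km] neA[of "k-1"] km
      by (simp add: image_Un Inf_fin.union)
    moreover have "Inf_fin (S ` insert n ` A (k - 1)) = sup (P x m (k - 1)) (x n)"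
    proof (cases "k = 1")
      case True
      have "A 0 = {{}}" unfolding A_def by (auto dest: finite_subset[OF _ finite_atLeastAtMost])
      thus ?thesis using True Sins by (simp add: P_def)
    next
      case False
      have ne: "J \<in> A (k-1) \<Longrightarrow> J \<noteq> {}" for J using False assms unfolding A_def by auto
      have "S ` insert n ` A (k - 1) = (\<lambda>J. sup (x n) (S J)) ` A (k - 1)"
        unfolding image_image using Sins finJ ne by (intro image_cong) auto
      hence "Inf_fin (S ` insert n ` A (k - 1)) = sup (x n) (Inf_fin (S ` A (k-1)))"
        using inf_fin_sup_const[OF finA neA, of "k-1" "x n" S] km by simp
      thus ?thesis using Pm[of "k-1"] False assms km by (simp add: sup_commute)
    qed
    ultimately show ?thesis using Pm[of k] assms km m_def by simp
  qed
qed

end
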